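(* Consider an instance of \textbf{LTSP} in which there is $k\in\mathbb N$ such that $s(f)=k$ and $n(f)\le 1$ for every file $f\in\mathcal F$. Then $\mathcal B_1=\{(f,f): f\in\mathcal F\setminus\{f_1\},\ n(f)=1\}$ is optimal, i.e., $v(\mathcal B_1)\le v(\mathcal B_1')$ for every set $\mathcal B_1'$ of mini-batches not containing the leftmost file $f_1$.
   Context: A single-track tape stores a sequence of files $\mathcal F=(f_1,\dots,f_n)$ laid out contiguously from left to right: file $f$ occupies blocks $l(f),\dots,r(f)$, has size $s(f)=r(f)-l(f)+1$, $l(f_1)=1$, $l(f_{i+1})=r(f_i)+1$, and $m=\sum_f s(f)$. The tape moves one block per time step; at time $0$ the head is at position $m$. A file is read when the head traverses it rightwards from $l(f)$ to $r(f)$. $\mathcal R$ is a finite set of requests, all released at time $0$, each associated with a file $f(r)$; $\mathcal R(f)$ is the set of requests for $f$ and $n(f)=|\mathcal R(f)|$. A request's response time is the time at which the head starts a rightward reading traversal of its file (all pending requests of a file are serviced simultaneously). \textbf{LTSP} asks to minimize the sum of response times. A mini-batch is a pair $b=(f,f')$ of files with $l(f)\le l(f')$; $l(b)=l(f)$, $r(b)=r(f')$, $s(b)=r(b)-l(b)+1$, and $\mathcal F(b)$ is the set of files $g$ with $l(b)\le l(g)$ and $r(g)\le r(b)$; it is atomic if $|\mathcal F(b)|=1$. Given a set $\mathcal B_1$ of mini-batches, the associated schedule is: Phase 1, the head moves leftwards from $m$ to position $1$, and whenever it reaches $l(b)$ for some $b\in\mathcal B_1$ it executes $b$ (moves rightwards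 from $l(b)$ to $r(b)$, reading every file of $\mathcal F(b)$, then returns to $l(b)$) before continuing leftwards; Phase 2, the head moves rightwards from position $1$ to $m$, reading every file. $v(\mathcal B_1)$ denotes the total response time of this schedule. Convention of the paper: the leftmost file of the tape starts Phase 2 and never belongs to a mini-batch of Phase 1. *)

theory Defs
  imports Main
begin

text \<open>Files are indexed 1..n; s i is the size of file i, req i = n(f_i) the number
 of requests for file i. Tape blocks are numbered 1..m.\<close>

definition lpos :: "(nat \<Rightarrow> nat) \<Rightarrow> nat \<Rightarrow> nat" where
  "lpos s i = 1 + (\<Sum>j\<in>{1..<i}. s j)"

definition rpos :: "(nat \<Rightarrow> nat) \<Rightarrow> nat \<Rightarrow> nat" where
  "rpos s i = lpos s i + s i - 1"

definition mtot :: "(nat \<Rightarrow> nat) \<Rightarrow> nat \<Rightarrow> nat" where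
  "mtot s n = (\<Sum>j\<in>{1..n}. s j)"

text \<open>A mini-batch is a pair (i, j) of file indices with l(f_i) <= l(f_j).
 Admissible Phase-1 sets: finite, files in range, not containing the leftmost file f_1.\<close>
definition valid_batches :: "(nat \<Rightarrow> nat) \<Rightarrow> nat \<Rightarrow> (nat \<times> nat) set \<Rightarrow> bool" where
  "valid_batches s n B \<longleftrightarrow> finite B \<and>
     (\<forall>(i, j)\<in>B. 2 \<le> i \<and> j \<le> n \<and> lpos s i \<le> lpos s j)"

definition in_batch :: "(nat \<Rightarrow> nat) \<Rightarrow> nat \<times> nat \<Rightarrow> nat \<Rightarrow> bool" where
  "in_batch s b g \<longleftrightarrow> lpos s (fst b) \<le> lpos s g \<and> rpos s g \<le> rpos s (snd b)"

text \<open>Time at which the head, moving leftwards in Phase 1, arrives at position p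
 (before executing the batches starting at p): distance travelled plus the
 round trips 2 (r(b) - l(b)) of all batches executed before.\<close>
definition arrive :: "(nat \<Rightarrow> nat) \<Rightarrow> nat \<Rightarrow> (nat \<times> nat) set \<Rightarrow> nat \<Rightarrow> nat" where
  "arrive s n B p = (mtot s n - p) +
     (\<Sum>b\<in>{b\<in>B. p < lpos s (fst b)}. 2 * (rpos s (snd b) - lpos s (fst b)))"

text \<open>Response time of file g: start of its first rightward reading traversal.
 If some batch covers g, the first one executed starts at the largest left endpoint
 among covering batches (batches sharing a left endpoint are executed longest
 first); otherwise g is read in Phase 2, which starts at time arrive 1.\<close>
definition resp :: "(nat \<Rightarrow> nat) \<Rightarrow> nat \<Rightarrow> (nat \<times> nat) set \<Rightarrow> nat \<Rightarrow> nat" where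
  "resp s n B g =
     (if \<exists>b\<in>B. in_batch s b g
      then (let p = Max {lpos s (fst b) | b. b \<in> B \<and> in_batch s b g}
            in arrive s n B p + (lpos s g - p))
      else arrive s n B 1 + (lpos s g - 1))"

definition vB :: "(nat \<Rightarrow> nat) \<Rightarrow> (nat \<Rightarrow> nat) \<Rightarrow> nat \<Rightarrow> (nat \<times> nat) set \<Rightarrow> nat" where
  "vB s req n B = (\<Sum>g\<in>{1..n}. req g * resp s n B g)"

end

theory Submission
  imports Defs
begin

definition Pp :: "(nat \<Rightarrow> nat) \<Rightarrow> (nat \<times> nat) set \<Rightarrow> nat \<Rightarrow> nat" where
  "Pp s B g = (if \<exists>b\<in>B. in_batch s b g then Max {lpos s (fst b) | b. b \<in> B \<and> in_batch s b g} else 1)"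

definition Tt :: "(nat \<Rightarrow> nat) \<Rightarrow> (nat \<times> nat) set \<Rightarrow> nat \<Rightarrow> nat" where
  "Tt s B p = (\<Sum>b\<in>{b\<in>B. p < lpos s (fst b)}. 2 * (rpos s (snd b) - lpos s (fst b)))"

lemma lpos_ge1: "1 \<le> lpos s i" by (simp add: lpos_def)

context
  fixes n k :: nat and s :: "nat \<Rightarrow> nat"
  assumes n1: "1 \<le> n" and k1: "1 \<le> k" and sk: "\<forall>i\<in>{1..n}. s i = k"
begin

lemma lpos_eq: "i \<le> Suc n \<Longrightarrow> lpos s i = 1 + (i-1)*k"
proof -
  assume i: "i \<le> Suc n"
  have "sum s {1..<i} = sum (\<lambda>_. k) {1..<i}"
    using i sk by (intro sum.cong) auto
  then show ?thesis by (simp add: lpos_def)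
qed

lemma rpos_eq: "1 \<le> i \<Longrightarrow> i \<le> n \<Longrightarrow> rpos s i = i*k"
proof -
  assume "1 \<le> i" "i \<le> n"
  then have "lpos s i = 1 + (i-1)*k" "s i = k" using lpos_eq sk by auto
  moreover have "(i-1)*k + k = i*k" using \<open>1 \<le> i\<close>
    by (cases i) auto
  ultimately show ?thesis unfolding rpos_def by simp
qed

lemma mtot_eq: "mtot s n = n*k"
proof -
  have "sum s {1..n} = sum (\<lambda>_. k) {1..n}" using sk by (intro sum.cong) auto
  then show ?thesis by (simp add: mtot_def)
qed

lemma L_mono: "1 \<le> i \<Longrightarrow> 1 \<le> j \<Longrightarrow> i \<le> Suc n \<Longrightarrow> j \<le> Suc n \<Longrightarrow> lpos s i \<le> lpos s j \<longleftrightarrow> i \<le> j"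
  using k1 by (auto simp add: lpos_eq)

lemma L_le_m: "1 \<le> g \<Longrightarrow> g \<le> n \<Longrightarrow> lpos s g \<le> n*k"
proof -
  assume a: "1 \<le> g" "g \<le> n"
  have "lpos s g = 1 + (g-1)*k" using a lpos_eq by auto
  also have "\<dots> \<le> g * k" using a k1
    by (cases g) auto
  also have "\<dots> \<le> n*k" using a by simp
  finally show ?thesis .
qed

lemma valid_elem: "valid_batches s n B \<Longrightarrow> b \<in> B \<Longrightarrow> 2 \<le> fst b \<and> fst b \<le> snd b \<and> snd b \<le> n"
proof -
  assume v: "valid_batches s n B" and b: "b \<in> B"
  obtain i j where ij: "b = (i,j)" by force
  have h: "2 \<le> i" "j \<le> n" "lpos s i \<le> lpos s j" using v b ij unfolding valid_batches_def by auto
  have "i \<le> j"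
  proof (rule ccontr)
    assume "\<not> i \<le> j"
    define i' where "i' = min i (Suc n)"
    have "i' \<le> Suc n" "j < i'" "i' \<le> i" "2 \<le> i'" using h n1 \<open>\<not> i \<le> j\<close> by (auto simp: i'_def)
    then have "(j-1)*k < (i'-1)*k" using k1 by (intro mult_less_mono1) auto
    then have "lpos s j < lpos s i'" using h \<open>i' \<le> Suc n\<close> by (simp add: lpos_eq)
    moreover have "lpos s i' \<le> lpos s i" unfolding lpos_def
      using \<open>i' \<le> i\<close> by (intro add_left_mono sum_mono2) auto
    ultimately show False using h by simp
  qed
  with h ij show ?thesis by simp
qed

lemma inb: "valid_batches s n B \<Longrightarrow> b \<in> B \<Longrightarrow> 1 \<le> g \<Longrightarrow> g \<le> n \<Longrightarrow>
   in_batch s b g \<longleftrightarrow> fst b \<le> g \<and> g \<le> snd b"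
proof -
  assume v: "valid_batches s n B" and b: "b \<in> B" and g: "1 \<le> g" "g \<le> n"
  have e: "2 \<le> fst b" "fst b \<le> snd b" "snd b \<le> n" using valid_elem[OF v b] by auto
  have "lpos s (fst b) \<le> lpos s g \<longleftrightarrow> fst b \<le> g" using e g by (intro L_mono) auto
  moreover have "rpos s g \<le> rpos s (snd b) \<longleftrightarrow> g \<le> snd b"
    using e g k1 by (simp add: rpos_eq)
  ultimately show ?thesis unfolding in_batch_def by simp
qed

lemma cov_fin: "valid_batches s n B \<Longrightarrow> finite {lpos s (fst b) | b. b \<in> B \<and> in_batch s b g}"
proof -
  assume v: "valid_batches s n B"
  have "{lpos s (fst b) | b. b \<in> B \<and> in_batch s b g} = (\<lambda>b. lpos s (fst b)) ` {b\<in>B. in_batch s b g}"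
    by force
  then show ?thesis using v unfolding valid_batches_def by simp
qed

lemma P_le: "valid_batches s n B \<Longrightarrow> 1 \<le> g \<Longrightarrow> g \<le> n \<Longrightarrow> 1 \<le> Pp s B g \<and> Pp s B g \<le> lpos s g"
proof -
  assume v: "valid_batches s n B" and g: "1 \<le> g" "g \<le> n"
  show ?thesis
  proof (cases "\<exists>b\<in>B. in_batch s b g")
    case True
    let ?S = "{lpos s (fst b) | b. b \<in> B \<and> in_batch s b g}"
    have fin: "finite ?S" using cov_fin[OF v] .
    have ne: "?S \<noteq> {}" using True by auto
    have "Max ?S \<le> lpos s g" using fin ne by (auto simp: in_batch_def)
    moreover have "1 \<le> Max ?S" using fin ne lpos_ge1 by (auto simp: Max_ge_iff)
    ultimately show ?thesis using True by (simp add: Pp_def)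
  next
    case False
    then show ?thesis using lpos_ge1[of s g] by (simp add: Pp_def)
  qed
qed

lemma resp_eq: "valid_batches s n B \<Longrightarrow> 1 \<le> g \<Longrightarrow> g \<le> n \<Longrightarrow>
  resp s n B g = (n*k - lpos s g) + 2*(lpos s g - Pp s B g) + Tt s B (Pp s B g)"
proof -
  assume v: "valid_batches s n B" and g: "1 \<le> g" "g \<le> n"
  have P: "1 \<le> Pp s B g" "Pp s B g \<le> lpos s g" using P_le[OF v g] by auto
  have L: "lpos s g \<le> n*k" using L_le_m g by auto
  have r: "resp s n B g = arrive s n B (Pp s B g) + (lpos s g - Pp s B g)"
    unfolding resp_def Pp_def by (simp add: Let_def)
  show ?thesis unfolding r arrive_def mtot_eq Tt_def using P L by simp
qed

lemma cov_witness: "valid_batches s n B \<Longrightarrow> 1 < Pp s B g \<Longrightarrow>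
   \<exists>b\<in>B. lpos s (fst b) = Pp s B g \<and> in_batch s b g"
proof -
  assume v: "valid_batches s n B" and p: "1 < Pp s B g"
  then have c: "\<exists>b\<in>B. in_batch s b g" by (auto simp: Pp_def split: if_splits)
  let ?S = "{lpos s (fst b) | b. b \<in> B \<and> in_batch s b g}"
  have "Max ?S \<in> ?S" using cov_fin[OF v] c by (intro Max_in) auto
  then obtain b where b: "b \<in> B" "in_batch s b g" "lpos s (fst b) = Max ?S" by auto
  have "Pp s B g = Max ?S" using c by (simp add: Pp_def)
  then show ?thesis using b by metis
qed

lemma batch_card: "valid_batches s n B \<Longrightarrow> b \<in> B \<Longrightarrow>
   (k-1) * card {h\<in>{1..n}. in_batch s b h} \<le> rpos s (snd b) - lpos s (fst b)"
proof -
  assume v: "valid_batches s n B" and b: "b \<in> B"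
  have e: "2 \<le> fst b" "fst b \<le> snd b" "snd b \<le> n" using valid_elem[OF v b] by auto
  have "{h\<in>{1..n}. in_batch s b h} \<subseteq> {fst b..snd b}" using inb[OF v b] by auto
  then have c: "card {h\<in>{1..n}. in_batch s b h} \<le> Suc (snd b) - fst b"
    using card_mono[of "{fst b..snd b}"] by fastforce
  define d where "d = Suc (snd b) - fst b"
  have d1: "1 \<le> d" using e by (simp add: d_def)
  have "rpos s (snd b) - lpos s (fst b) = snd b * k - (1 + (fst b - 1)*k)"
    using e by (simp add: rpos_eq lpos_eq)
  also have "\<dots> = d * k - 1"
  proof -
    have "snd b * k = (fst b - 1)*k + d*k" using e
      by (simp add: d_def add_mult_distrib[symmetric])
    then show ?thesis by simp
  qed
  finally have eq: "rpos s (snd b) - lpos s (fst b) = d * k - 1" .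
  have "(k-1) * card {h\<in>{1..n}. in_batch s b h} \<le> (k-1) * d" using c by (simp add: d_def)
  also have "\<dots> \<le> d*k - 1" using d1 k1 by (simp add: diff_mult_distrib2 mult.commute)
  finally show ?thesis using eq by simp
qed

lemma T_bound: "valid_batches s n B \<Longrightarrow>
  2*(k-1)*card {h\<in>{1..n}. \<exists>b\<in>B. p < lpos s (fst b) \<and> in_batch s b h} \<le> Tt s B p"
proof -
  assume v: "valid_batches s n B"
  let ?Bp = "{b\<in>B. p < lpos s (fst b)}"
  have fB: "finite ?Bp" using v unfolding valid_batches_def by simp
  have "{h\<in>{1..n}. \<exists>b\<in>B. p < lpos s (fst b) \<and> in_batch s b h} = (\<Union>b\<in>?Bp. {h\<in>{1..n}. in_batch s b h})"
    by auto
  then have "card {h\<in>{1..n}. \<exists>b\<in>B. p < lpos s (fst b) \<and> in_batch s b h} \<le> (\<Sum>b\<in>?Bp. card {h\<in>{1..n}. in_batch s b h})"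
    using card_UN_le[OF fB] by simp
  then have "2*(k-1)*card {h\<in>{1..n}. \<exists>b\<in>B. p < lpos s (fst b) \<and> in_batch s b h}
     \<le> 2*(k-1)*(\<Sum>b\<in>?Bp. card {h\<in>{1..n}. in_batch s b h})"
    by (rule mult_le_mono2)
  also have "\<dots> = (\<Sum>b\<in>?Bp. 2*((k-1)*card {h\<in>{1..n}. in_batch s b h}))"
    by (simp add: sum_distrib_left mult.assoc)
  also have "\<dots> \<le> Tt s B p" unfolding Tt_def
    using batch_card[OF v] by (intro sum_mono) auto
  finally show ?thesis .
qed

lemma left_count: "1 \<le> h \<Longrightarrow> h \<le> n \<Longrightarrow> 1 \<le> p \<Longrightarrow>
   card {g\<in>{1..n}. g < h \<and> p \<le> lpos s g} * k \<le> lpos s h - p"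
proof -
  assume h: "1 \<le> h" "h \<le> n" and p1: "1 \<le> p"
  let ?S = "{g\<in>{1..n}. g < h \<and> p \<le> lpos s g}"
  show ?thesis
  proof (cases "?S = {}")
    case True then have "card ?S = 0" by (metis card.empty)
    then show ?thesis by (metis mult_0 zero_le)
  next
    case False
    define g0 where "g0 = Min ?S"
    have fin: "finite ?S" by simp
    have g0S: "g0 \<in> ?S" using Min_in[OF fin False] by (simp add: g0_def)
    have "?S \<subseteq> {g0..<h}" using Min_le[OF fin] by (auto simp: g0_def)
    then have "card ?S \<le> h - g0" using card_mono[of "{g0..<h}"] by fastforce
    then have "card ?S * k \<le> (h - g0) * k" by simp
    also have "\<dots> = (h-1)*k - (g0-1)*k" using g0S by (simp add: diff_mult_distrib[symmetric])
    also have "\<dots> = lpos s h - lpos s g0" using g0S h by (simp add: lpos_eq)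
    also have "\<dots> \<le> lpos s h - p" using g0S by (intro diff_le_mono2) simp
    finally show ?thesis .
  qed
qed

end

lemma card_filter_sum: "finite A \<Longrightarrow> card {x\<in>A. P x} = (\<Sum>x\<in>A. if P x then 1 else 0)"
  by (simp add: sum.inter_filter[symmetric])

lemma vB_R: "\<forall>i\<in>{1..n}. req i \<le> (1::nat) \<Longrightarrow>
  vB s req n B = (\<Sum>g\<in>{g\<in>{1..n}. req g = 1}. resp s n B g)"
proof -
  assume r: "\<forall>i\<in>{1..n}. req i \<le> (1::nat)"
  have "vB s req n B = (\<Sum>g\<in>{1..n}. if req g = 1 then resp s n B g else 0)"
    unfolding vB_def
  proof (intro sum.cong refl)
    fix g assume "g \<in> {1..n}"
    then have "req g = 0 \<or> req g = 1" using r by force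
    then show "req g * resp s n B g = (if req g = 1 then resp s n B g else 0)" by auto
  qed
  also have "\<dots> = (\<Sum>g\<in>{g\<in>{1..n}. req g = 1}. resp s n B g)"
    by (rule sum.inter_filter[symmetric]) simp
  finally show ?thesis .
qed

theorem theorem2:
  fixes n k :: nat and s req :: "nat \<Rightarrow> nat" and B' :: "(nat \<times> nat) set"
  assumes "1 \<le> n" and "1 \<le> k"
    and "\<forall>i\<in>{1..n}. s i = k"
    and "\<forall>i\<in>{1..n}. req i \<le> 1"
    and "valid_batches s n B'"
  shows "vB s req n {(i, i) | i. i \<in> {2..n} \<and> req i = 1} \<le> vB s req n B'"
proof -
  note n1 = assms(1) and k1 = assms(2) and sk = assms(3) and v' = assms(5)
  note lpos_eq = lpos_eq[OF n1 k1 sk] and rpos_eq = rpos_eq[OF n1 k1 sk]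
  note L_mono = L_mono[OF n1 k1 sk] and inb = inb[OF n1 k1 sk]
  note resp_eq = resp_eq[OF n1 k1 sk] and P_le = P_le[OF n1 k1 sk]
  note cov_witness = cov_witness[OF n1 k1 sk] and T_bound = T_bound[OF n1 k1 sk]
  note left_count = left_count[OF n1 k1 sk]
  define R where "R = {g\<in>{1..n}. req g = 1}"
  define B1 where "B1 = {(i, i) | i. i \<in> {2..n} \<and> req i = 1}"
  have finR: "finite R" by (simp add: R_def)
  have B1img: "B1 = (\<lambda>i. (i,i)) ` {i\<in>{2..n}. req i = 1}" unfolding B1_def by auto
  have v1: "valid_batches s n B1" unfolding valid_batches_def B1img by auto
  define c1 where "c1 g = card {h\<in>R. g < h}" for g
  have resp1: "resp s n B1 g = (n*k - lpos s g) + 2*(k-1)*c1 g" if g: "g \<in> R" for g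
  proof -
    have g1: "1 \<le> g" "g \<le> n" using g by (auto simp: R_def)
    have P: "Pp s B1 g = lpos s g"
    proof (cases "g = 1")
      case True
      have "\<not> in_batch s b g" if "b \<in> B1" for b
        using inb[OF v1 that] g1 that True unfolding B1img by auto
      then show ?thesis using True by (auto simp: Pp_def lpos_def)
    next
      case False
      have gB: "(g,g) \<in> B1" using g False by (auto simp: R_def B1_def)
      have "{lpos s (fst b) | b. b \<in> B1 \<and> in_batch s b g} = {lpos s g}"
      proof -
        have "b \<in> B1 \<and> in_batch s b g \<longleftrightarrow> b = (g,g)" for b
          using inb[OF v1 _ g1] gB unfolding B1img by auto
        then show ?thesis by auto
      qed
      moreover have "in_batch s (g,g) g" by (simp add: in_batch_def)
      ultimately show ?thesis using gB by (auto simp: Pp_def)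
    qed
    have T: "Tt s B1 (lpos s g) = 2*(k-1)*c1 g"
    proof -
      have set: "{b\<in>B1. lpos s g < lpos s (fst b)} = (\<lambda>i. (i,i)) ` {h\<in>R. g < h}"
      proof -
        have "lpos s g < lpos s i \<longleftrightarrow> g < i" if "1 \<le> i" "i \<le> n" for i
          using L_mono[of i g] L_mono[of g i] g1 that by auto
        then show ?thesis unfolding B1img R_def using g1 by force
      qed
      have "Tt s B1 (lpos s g) = (\<Sum>h\<in>{h\<in>R. g < h}. 2 * (rpos s h - lpos s h))"
        unfolding Tt_def set by (subst sum.reindex) (auto simp: inj_on_def)
      also have "\<dots> = (\<Sum>h\<in>{h\<in>R. g < h}. 2*(k-1))"
      proof (intro sum.cong refl)
        fix h assume "h \<in> {h\<in>R. g < h}"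
        then have h: "1 \<le> h" "h \<le> n" by (auto simp: R_def)
        have "h*k = (h-1)*k + k" using h by (cases h) auto
        then show "2 * (rpos s h - lpos s h) = 2*(k-1)" using h by (simp add: rpos_eq lpos_eq)
      qed
      also have "\<dots> = 2*(k-1)*c1 g" by (simp add: c1_def)
      finally show ?thesis .
    qed
    show ?thesis using resp_eq[OF v1 g1] P T by simp
  qed
  define P where "P = Pp s B'"
  define A where "A g = {h\<in>R. P g < P h}" for g
  define Bs where "Bs g = {g'\<in>R. g' < g \<and> P g \<le> P g'}" for g
  define C where "C g = {h\<in>R. g < h \<and> P h \<le> P g}" for g
  have resp2: "(n*k - lpos s g) + 2*(k-1)*(card (A g) + card (Bs g)) \<le> resp s n B' g"
    if g: "g \<in> R" for g
  proof -
    have g1: "1 \<le> g" "g \<le> n" using g by (auto simp: R_def)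
    have Pg: "1 \<le> P g" "P g \<le> lpos s g" using P_le[OF v' g1] by (auto simp: P_def)
    have "A g \<subseteq> {h\<in>{1..n}. \<exists>b\<in>B'. P g < lpos s (fst b) \<and> in_batch s b h}"
    proof
      fix h assume "h \<in> A g"
      then have h: "h \<in> R" "P g < P h" by (auto simp: A_def)
      then have "1 < P h" using Pg by simp
      then have "\<exists>b\<in>B'. lpos s (fst b) = P h \<and> in_batch s b h"
        using cov_witness[OF v', of h] unfolding P_def by blast
      then obtain b where "b \<in> B'" "lpos s (fst b) = P h" "in_batch s b h" by blast
      then show "h \<in> {h\<in>{1..n}. \<exists>b\<in>B'. P g < lpos s (fst b) \<and> in_batch s b h}"
        using h by (auto simp: R_def) (metis)
    qed
    then have "card (A g) \<le> card {h\<in>{1..n}. \<exists>b\<in>B'. P g < lpos s (fst b) \<and> in_batch s b h}"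
      by (intro card_mono) auto
    then have a: "2*(k-1)*card (A g) \<le> Tt s B' (P g)"
      using T_bound[OF v', of "P g"] mult_le_mono2 le_trans by blast
    have "Bs g \<subseteq> {g'\<in>{1..n}. g' < g \<and> P g \<le> lpos s g'}"
      using P_le[OF v'] by (force simp: Bs_def R_def P_def)
    then have "card (Bs g) \<le> card {g'\<in>{1..n}. g' < g \<and> P g \<le> lpos s g'}"
      by (intro card_mono) auto
    then have "card (Bs g) * k \<le> lpos s g - P g"
      using left_count[OF g1 Pg(1)] mult_le_mono1 le_trans by blast
    then have "(k-1) * card (Bs g) \<le> lpos s g - P g"
      by (metis diff_le_self le_trans mult.commute mult_le_mono1)
    then have b: "2*(k-1)*card (Bs g) \<le> 2*(lpos s g - P g)" by simp
    have "resp s n B' g = (n*k - lpos s g) + 2*(lpos s g - P g) + Tt s B' (P g)"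
      using resp_eq[OF v' g1] by (simp add: P_def)
    then show ?thesis using a b by (simp add: add_mult_distrib2)
  qed
  have sumC: "(\<Sum>g\<in>R. card (C g)) = (\<Sum>g\<in>R. card (Bs g))"
  proof -
    have "(\<Sum>g\<in>R. card (C g)) = (\<Sum>g\<in>R. \<Sum>h\<in>R. if g < h \<and> P h \<le> P g then 1 else 0)"
      unfolding C_def using finR by (simp add: card_filter_sum)
    also have "\<dots> = (\<Sum>h\<in>R. \<Sum>g\<in>R. if g < h \<and> P h \<le> P g then 1 else 0)"
      by (rule sum.swap)
    also have "\<dots> = (\<Sum>h\<in>R. card (Bs h))"
      unfolding Bs_def using finR by (simp add: card_filter_sum)
    finally show ?thesis .
  qed
  have c1le: "c1 g \<le> card (A g) + card (C g)" for g
  proof -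
    have "{h\<in>R. g < h} \<subseteq> A g \<union> C g" by (auto simp: A_def C_def)
    then have "c1 g \<le> card (A g \<union> C g)" unfolding c1_def
      by (intro card_mono) (auto simp: A_def C_def finR)
    also have "\<dots> \<le> card (A g) + card (C g)" by (rule card_Un_le)
    finally show ?thesis .
  qed
  have "vB s req n B1 = (\<Sum>g\<in>R. (n*k - lpos s g) + 2*(k-1)*c1 g)"
    unfolding vB_R[OF assms(4)] R_def[symmetric] using resp1 by (intro sum.cong) auto
  also have "\<dots> = (\<Sum>g\<in>R. n*k - lpos s g) + 2*(k-1)*(\<Sum>g\<in>R. c1 g)"
    by (simp add: sum.distrib sum_distrib_left)
  also have "\<dots> \<le> (\<Sum>g\<in>R. n*k - lpos s g) + 2*(k-1)*((\<Sum>g\<in>R. card (A g)) + (\<Sum>g\<in>R. card (Bs g)))"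
  proof -
    have "(\<Sum>g\<in>R. c1 g) \<le> (\<Sum>g\<in>R. card (A g) + card (C g))" by (intro sum_mono c1le)
    also have "\<dots> = (\<Sum>g\<in>R. card (A g)) + (\<Sum>g\<in>R. card (Bs g))"
      by (simp add: sum.distrib sumC)
    finally show ?thesis by simp
  qed
  also have "\<dots> = (\<Sum>g\<in>R. (n*k - lpos s g) + 2*(k-1)*(card (A g) + card (Bs g)))"
    by (simp add: sum.distrib sum_distrib_left distrib_left)
  also have "\<dots> \<le> (\<Sum>g\<in>R. resp s n B' g)" by (intro sum_mono resp2)
  also have "\<dots> = vB s req n B'" unfolding vB_R[OF assms(4)] R_def ..
  finally show ?thesis unfolding B1_def .
qed

end
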